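(* Let $[\mu]\in\mathbb PV_n$ be a critical point of $F_n$ with $\mathrm M_\mu=c_\mu I+D_\mu$, $c_\mu\in\mathbb R$, $D_\mu\in\mathrm{Der}(\mu)$. Then (i) $c_\mu=\dfrac{\operatorname{tr}\mathrm M_\mu^2}{\operatorname{tr}\mathrm M_\mu}=-\dfrac12\dfrac{\operatorname{tr}\mathrm M_\mu^2}{\|\mu\|^2}<0$; (ii) if $\operatorname{tr}D_\mu\neq0$, then $c_\mu=-\dfrac{\operatorname{tr}D_\mu^2}{\operatorname{tr}D_\mu}$ and $\operatorname{tr}D_\mu>0$.
   Context: $V_n$ is the space of bilinear maps $\mu:\mathbb C^n\times\mathbb C^n\to\mathbb C^n$ with the Hermitian inner product $\langle\mu,\lambda\rangle=\sum_{i,j,k}\langle\mu(X_i,X_j),X_k\rangle\overline{\langle\lambda(X_i,X_j),X_k\rangle}$ ($\{X_i\}$ orthonormal for the standard inner product of $\mathbb C^n$). $L^\mu_XY=\mu(X,Y)$, $R^\mu_XY=\mu(Y,X)$, $\mathrm M_\mu=2\sum_i L^\mu_{X_i}(L^\mu_{X_i})^*-2\sum_i (L^\mu_{X_i})^*L^\mu_{X_i}-2\sum_i (R^\mu_{X_i})^*R^\mu_{X_i}$. $F_n([\mu])=\operatorname{tr}\mathrm M_\mu^2/\|\mu\|^4$ on $\mathbb PV_n$; $\mathrm{Der}(\mu)$ is the derivation algebra. $[\mu]$ is a critical point of $F_n$ iff $\mathrm M_\mu=c_\mu I+D_\mu$ with $c_\mu\in\mathbb R$, $D_\mu\in\mathrm{Der}(\mu)$.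 *)

theory Defs
  imports "HOL-Analysis.Analysis"
begin

text \<open>C^n is modelled as complex^'n for a finite index type 'n (n = CARD('n)).
  A bilinear map mu : C^n x C^n -> C^n is given by its structure constants
  w.r.t. the standard orthonormal basis X_i = axis i 1:
  sc i j k = <mu(X_i,X_j),X_k>.\<close>

type_synonym 'n bilin = "'n \<Rightarrow> 'n \<Rightarrow> 'n \<Rightarrow> complex"

definition bapply :: "'n::finite bilin \<Rightarrow> complex^'n \<Rightarrow> complex^'n \<Rightarrow> complex^'n" where
  "bapply mu x y = (\<chi> k. \<Sum>i\<in>UNIV. \<Sum>j\<in>UNIV. x$i * y$j * mu i j k)"

definition bnorm2 :: "'n::finite bilin \<Rightarrow> real" where
  "bnorm2 mu = (\<Sum>i\<in>UNIV. \<Sum>j\<in>UNIV. \<Sum>k\<in>UNIV. (cmod (mu i j k))\<^sup>2)"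

definition cadj :: "complex^'n^'n \<Rightarrow> complex^'n^'n" where
  "cadj A = (\<chi> i j. cnj (A$j$i))"

definition Lop :: "'n::finite bilin \<Rightarrow> complex^'n \<Rightarrow> complex^'n^'n" where
  "Lop mu x = (\<chi> k l. (bapply mu x (axis l 1))$k)"

definition Rop :: "'n::finite bilin \<Rightarrow> complex^'n \<Rightarrow> complex^'n^'n" where
  "Rop mu x = (\<chi> k l. (bapply mu (axis l 1) x)$k)"

definition Mmu :: "'n::finite bilin \<Rightarrow> complex^'n^'n" where
  "Mmu mu =
     2 *\<^sub>R (\<Sum>i\<in>UNIV. Lop mu (axis i 1) ** cadj (Lop mu (axis i 1)))
   - 2 *\<^sub>R (\<Sum>i\<in>UNIV. cadj (Lop mu (axis i 1)) ** Lop mu (axis i 1))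
   - 2 *\<^sub>R (\<Sum>i\<in>UNIV. cadj (Rop mu (axis i 1)) ** Rop mu (axis i 1))"

definition Der :: "'n::finite bilin \<Rightarrow> (complex^'n^'n) set" where
  "Der mu = {D. \<forall>x y. D *v bapply mu x y = bapply mu (D *v x) y + bapply mu x (D *v y)}"

end

theory Submission
  imports Defs
begin

lemma bapply_axis: "bapply mu (axis a 1) (axis b 1) $ k = mu a b k"
  apply (simp add: bapply_def axis_def if_distrib[of "\<lambda>x. x * _"] cong: if_cong)
  apply (subst sum.swap) apply simp done

lemma bapply_axis2: "bapply mu x (axis b 1) $ k = (\<Sum>a\<in>UNIV. x$a * mu a b k)"
  by (simp add: bapply_def axis_def if_distrib[of "\<lambda>x. x * _"] if_distrib[of "\<lambda>x. _ * x"] cong: if_cong)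

lemma bapply_axis1: "bapply mu (axis a 1) y $ k = (\<Sum>b\<in>UNIV. y$b * mu a b k)"
  apply (simp add: bapply_def axis_def if_distrib[of "\<lambda>x. x * _"] cong: if_cong)
  apply (subst sum.swap) apply simp done

lemma axis_nth: "axis i (1::complex) $ a = (if a = i then 1 else 0)"
  by (simp add: axis_def)

lemma mvc: "((A::complex^'n::finite^'n) *v v) $ m = (\<Sum>k\<in>UNIV. A$m$k * v$k)"
  by (simp add: matrix_vector_mult_def)

lemma mv_axis: "((D::complex^'n::finite^'n) *v axis i 1) $ a = D$a$i"
  by (simp add: matrix_vector_mult_def axis_def if_distrib[of "\<lambda>x. _ * x"] cong: if_cong)

lemma Lop_axis: "Lop mu (axis i 1) $ k $ l = mu i l k"
  by (simp add: Lop_def bapply_axis)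

lemma Rop_axis: "Rop mu (axis i 1) $ k $ l = mu l i k"
  by (simp add: Rop_def bapply_axis)

lemma Mmu_entry: "Mmu mu $ k $ m =
   2 * (\<Sum>i\<in>UNIV. \<Sum>l\<in>UNIV. mu i l k * cnj (mu i l m))
 - 2 * (\<Sum>i\<in>UNIV. \<Sum>l\<in>UNIV. cnj (mu i k l) * mu i m l)
 - 2 * (\<Sum>i\<in>UNIV. \<Sum>l\<in>UNIV. cnj (mu k i l) * mu m i l)"
  by (simp add: Mmu_def matrix_matrix_mult_def cadj_def Lop_axis Rop_axis scaleR_conv_of_real)

lemma sum4: "(\<Sum>a\<in>(UNIV::'a::finite set). \<Sum>b\<in>(UNIV::'b::finite set). \<Sum>c\<in>(UNIV::'c::finite set). \<Sum>d\<in>(UNIV::'d::finite set). f a b c d)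
   = (\<Sum>x\<in>UNIV. f (fst x) (fst (snd x)) (fst (snd (snd x))) (snd (snd (snd x))))"
  by (simp add: sum.cartesian_product case_prod_beta UNIV_Times_UNIV[symmetric] del: UNIV_Times_UNIV)

lemma P1: fixes E :: "complex^'n^'n" and mu :: "'n::finite bilin" shows
 "(\<Sum>k\<in>UNIV. \<Sum>m\<in>UNIV. (\<Sum>i\<in>UNIV. \<Sum>l\<in>UNIV. mu i l k * cnj (mu i l m)) * E$m$k)
  = (\<Sum>i\<in>UNIV. \<Sum>j\<in>UNIV. \<Sum>m\<in>UNIV. cnj (mu i j m) * (\<Sum>k\<in>UNIV. E$m$k * mu i j k))"
proof -
  have A: "?thesis \<longleftrightarrow> (\<Sum>k\<in>UNIV. \<Sum>m\<in>UNIV. \<Sum>i\<in>UNIV. \<Sum>j\<in>UNIV. mu i j k * cnj (mu i j m) * E$m$k)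
      = (\<Sum>i\<in>UNIV. \<Sum>j\<in>UNIV. \<Sum>m\<in>UNIV. \<Sum>k\<in>UNIV. mu i j k * cnj (mu i j m) * E$m$k)"
    by (simp add: sum_distrib_left sum_distrib_right mult_ac)
  have B: "(\<Sum>k\<in>UNIV. \<Sum>m\<in>UNIV. \<Sum>i\<in>UNIV. \<Sum>j\<in>UNIV. mu i j k * cnj (mu i j m) * E$m$k)
      = (\<Sum>i\<in>UNIV. \<Sum>j\<in>UNIV. \<Sum>m\<in>UNIV. \<Sum>k\<in>UNIV. mu i j k * cnj (mu i j m) * E$m$k)"
    unfolding sum4
    by (rule sum.reindex_bij_witness[where i="\<lambda>(i,j,m,k). (k,m,i,j)" and j="\<lambda>(k,m,i,j). (i,j,m,k)"]) auto
  show ?thesis using A B by simp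
qed

lemma P2: fixes E :: "complex^'n^'n" and mu :: "'n::finite bilin" shows
 "(\<Sum>k\<in>UNIV. \<Sum>m\<in>UNIV. (\<Sum>i\<in>UNIV. \<Sum>l\<in>UNIV. cnj (mu i k l) * mu i m l) * E$m$k)
  = (\<Sum>i\<in>UNIV. \<Sum>j\<in>UNIV. \<Sum>m\<in>UNIV. cnj (mu i j m) * (\<Sum>p\<in>UNIV. E$p$j * mu i p m))"
proof -
  have A: "?thesis \<longleftrightarrow> (\<Sum>k\<in>UNIV. \<Sum>m\<in>UNIV. \<Sum>i\<in>UNIV. \<Sum>l\<in>UNIV. cnj (mu i k l) * mu i m l * E$m$k)
      = (\<Sum>i\<in>UNIV. \<Sum>j\<in>UNIV. \<Sum>m\<in>UNIV. \<Sum>p\<in>UNIV. cnj (mu i j m) * mu i p m * E$p$j)"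
    by (simp add: sum_distrib_left sum_distrib_right mult_ac)
  have B: "(\<Sum>k\<in>UNIV. \<Sum>m\<in>UNIV. \<Sum>i\<in>UNIV. \<Sum>l\<in>UNIV. cnj (mu i k l) * mu i m l * E$m$k)
      = (\<Sum>i\<in>UNIV. \<Sum>j\<in>UNIV. \<Sum>m\<in>UNIV. \<Sum>p\<in>UNIV. cnj (mu i j m) * mu i p m * E$p$j)"
    unfolding sum4
    by (rule sum.reindex_bij_witness[where i="\<lambda>(i,j,m,p). (j,p,i,m)" and j="\<lambda>(k,m,i,l). (i,k,l,m)"]) auto
  show ?thesis using A B by simp
qed

lemma P3: fixes E :: "complex^'n^'n" and mu :: "'n::finite bilin" shows
 "(\<Sum>k\<in>UNIV. \<Sum>m\<in>UNIV. (\<Sum>i\<in>UNIV. \<Sum>l\<in>UNIV. cnj (mu k i l) * mu m i l) * E$m$k)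
  = (\<Sum>i\<in>UNIV. \<Sum>j\<in>UNIV. \<Sum>m\<in>UNIV. cnj (mu i j m) * (\<Sum>p\<in>UNIV. E$p$i * mu p j m))"
proof -
  have A: "?thesis \<longleftrightarrow> (\<Sum>k\<in>UNIV. \<Sum>m\<in>UNIV. \<Sum>i\<in>UNIV. \<Sum>l\<in>UNIV. cnj (mu k i l) * mu m i l * E$m$k)
      = (\<Sum>i\<in>UNIV. \<Sum>j\<in>UNIV. \<Sum>m\<in>UNIV. \<Sum>p\<in>UNIV. cnj (mu i j m) * mu p j m * E$p$i)"
    by (simp add: sum_distrib_left sum_distrib_right mult_ac)
  have B: "(\<Sum>k\<in>UNIV. \<Sum>m\<in>UNIV. \<Sum>i\<in>UNIV. \<Sum>l\<in>UNIV. cnj (mu k i l) * mu m i l * E$m$k)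
      = (\<Sum>i\<in>UNIV. \<Sum>j\<in>UNIV. \<Sum>m\<in>UNIV. \<Sum>p\<in>UNIV. cnj (mu i j m) * mu p j m * E$p$i)"
    unfolding sum4
    by (rule sum.reindex_bij_witness[where i="\<lambda>(i,j,m,p). (i,p,j,m)" and j="\<lambda>(k,m,i,l). (k,i,l,m)"]) auto
  show ?thesis using A B by simp
qed

lemma trace_ME: fixes E :: "complex^'n^'n" and mu :: "'n::finite bilin" shows
 "trace (Mmu mu ** E) =
    2 * (\<Sum>i\<in>UNIV. \<Sum>j\<in>UNIV. \<Sum>m\<in>UNIV. cnj (mu i j m) * (\<Sum>k\<in>UNIV. E$m$k * mu i j k))
  - 2 * (\<Sum>i\<in>UNIV. \<Sum>j\<in>UNIV. \<Sum>m\<in>UNIV. cnj (mu i j m) * (\<Sum>p\<in>UNIV. E$p$j * mu i p m))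
  - 2 * (\<Sum>i\<in>UNIV. \<Sum>j\<in>UNIV. \<Sum>m\<in>UNIV. cnj (mu i j m) * (\<Sum>p\<in>UNIV. E$p$i * mu p j m))"
proof -
  have "trace (Mmu mu ** E) = (\<Sum>k\<in>UNIV. \<Sum>m\<in>UNIV. Mmu mu $ k $ m * E$m$k)"
    by (simp add: trace_def matrix_matrix_mult_def)
  also have "\<dots> = 2 * (\<Sum>k\<in>UNIV. \<Sum>m\<in>UNIV. (\<Sum>i\<in>UNIV. \<Sum>l\<in>UNIV. mu i l k * cnj (mu i l m)) * E$m$k)
     - 2 * (\<Sum>k\<in>UNIV. \<Sum>m\<in>UNIV. (\<Sum>i\<in>UNIV. \<Sum>l\<in>UNIV. cnj (mu i k l) * mu i m l) * E$m$k)
     - 2 * (\<Sum>k\<in>UNIV. \<Sum>m\<in>UNIV. (\<Sum>i\<in>UNIV. \<Sum>l\<in>UNIV. cnj (mu k i l) * mu m i l) * E$m$k)"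
    unfolding Mmu_entry
    by (simp only: left_diff_distrib sum_subtractf sum_distrib_left[symmetric] mult.assoc)
  finally show ?thesis unfolding P1[where mu=mu] P2[where mu=mu] P3[where mu=mu] .
qed

lemma der_comp: assumes "D \<in> Der mu"
  shows "(\<Sum>k\<in>UNIV. D$m$k * mu i j k) = (\<Sum>p\<in>UNIV. D$p$i * mu p j m) + (\<Sum>p\<in>UNIV. D$p$j * mu i p m)"
proof -
  have "D *v bapply mu (axis i 1) (axis j 1) = bapply mu (D *v axis i 1) (axis j 1) + bapply mu (axis i 1) (D *v axis j 1)"
    using assms by (simp add: Der_def)
  hence "(D *v bapply mu (axis i 1) (axis j 1)) $ m = (bapply mu (D *v axis i 1) (axis j 1) + bapply mu (axis i 1) (D *v axis j 1)) $ m"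
    by simp
  thus ?thesis by (simp add: mvc bapply_axis bapply_axis1 bapply_axis2 mv_axis axis_nth if_distrib[of "\<lambda>x. x * _"] if_distrib[of "\<lambda>x. _ * x"] cong: if_cong)
qed

lemma trace_MD: assumes "D \<in> Der mu" shows "trace (Mmu mu ** D) = 0"
  unfolding trace_ME by (simp add: der_comp[OF assms] distrib_left sum.distrib)

lemma bnorm2_c: "complex_of_real (bnorm2 mu) = (\<Sum>i\<in>UNIV. \<Sum>j\<in>UNIV. \<Sum>m\<in>UNIV. cnj (mu i j m) * mu i j m)"
  by (simp add: bnorm2_def complex_norm_square mult.commute del: of_real_power)

lemma trace_M: "trace (Mmu mu) = - 2 * complex_of_real (bnorm2 mu)"
proof -
  have "trace (Mmu mu) = trace (Mmu mu ** mat 1)" by simp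
  also have "\<dots> = - 2 * complex_of_real (bnorm2 mu)"
    unfolding trace_ME bnorm2_c
    by (simp add: mat_def if_distrib[of "\<lambda>x. x * _"] cong: if_cong)
  finally show ?thesis .
qed

lemma herm_M: "cnj (Mmu mu $ m $ k) = Mmu mu $ k $ m"
  by (simp add: Mmu_entry mult.commute)

lemma tr_sq: assumes "\<And>k m. cnj (A$m$k) = A$k$m"
  shows "trace (A ** A) = complex_of_real (\<Sum>k\<in>UNIV. \<Sum>m\<in>UNIV. (cmod (A$k$m))\<^sup>2)"
proof -
  have "\<And>k m. A$k$m * A$m$k = complex_of_real ((cmod (A$k$m))\<^sup>2)"
    using assms by (metis complex_norm_square)
  thus ?thesis by (simp add: trace_def matrix_matrix_mult_def)
qed

lemma pos_sq: fixes A :: "complex^'n::finite^'n" assumes "trace A \<noteq> 0"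
  shows "0 < (\<Sum>k\<in>UNIV. \<Sum>m\<in>UNIV. (cmod (A$k$m))\<^sup>2)"
proof -
  obtain k where k: "A$k$k \<noteq> 0" using assms unfolding trace_def by (meson sum.neutral)
  have "0 < (cmod (A$k$k))\<^sup>2" using k by simp
  also have "\<dots> \<le> (\<Sum>m\<in>UNIV. (cmod (A$k$m))\<^sup>2)"
    by (rule member_le_sum) auto
  also have "\<dots> \<le> (\<Sum>k\<in>UNIV. \<Sum>m\<in>UNIV. (cmod (A$k$m))\<^sup>2)"
    by (rule member_le_sum) (auto intro: sum_nonneg)
  finally show ?thesis .
qed

lemma bnorm2_pos: assumes "mu \<noteq> (\<lambda>i j k. 0)" shows "0 < bnorm2 mu"
proof -
  obtain i j k where h: "mu i j k \<noteq> 0" using assms by blast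
  have "0 < (cmod (mu i j k))\<^sup>2" using h by simp
  also have "\<dots> \<le> (\<Sum>k\<in>UNIV. (cmod (mu i j k))\<^sup>2)"
    by (rule member_le_sum) auto
  also have "\<dots> \<le> (\<Sum>j\<in>UNIV. \<Sum>k\<in>UNIV. (cmod (mu i j k))\<^sup>2)"
    by (rule member_le_sum) (auto intro: sum_nonneg)
  also have "\<dots> \<le> bnorm2 mu" unfolding bnorm2_def
    by (rule member_le_sum) (auto intro!: sum_nonneg)
  finally show ?thesis .
qed

lemma trace_mat_r: "trace ((A::complex^'n::finite^'n) ** mat x) = x * trace A"
  by (simp add: trace_def matrix_matrix_mult_def mat_def sum_distrib_left mult.commute if_distrib[of "\<lambda>y. _ * y"] cong: if_cong)

theorem lemma3p6:
  fixes mu :: "'n::finite bilin" and c :: real and D :: "complex^'n^'n"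
  assumes "mu \<noteq> (\<lambda>i j k. 0)"
    and "D \<in> Der mu"
    and "Mmu mu = mat (complex_of_real c) + D"
  shows "complex_of_real c = trace (Mmu mu ** Mmu mu) / trace (Mmu mu)
       \<and> complex_of_real c = - (1/2) * trace (Mmu mu ** Mmu mu) / complex_of_real (bnorm2 mu)
       \<and> c < 0
       \<and> (trace D \<noteq> 0 \<longrightarrow>
         complex_of_real c = - trace (D ** D) / trace D \<and> trace D \<in> \<real> \<and> 0 < Re (trace D))"
proof -
  define M where "M = Mmu mu"
  define b where "b = bnorm2 mu"
  have bpos: "0 < b" using bnorm2_pos[OF assms(1)] by (simp add: b_def)
  have tM: "trace M = - 2 * complex_of_real b" by (simp add: M_def b_def trace_M)
  have tM0: "trace M \<noteq> 0" using tM bpos by simp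
  have tMD: "trace (M ** D) = 0" using trace_MD[OF assms(2)] by (simp add: M_def)
  have Meq: "M = mat (complex_of_real c) + D" using assms(3) by (simp add: M_def)
  have hM: "\<And>k m. cnj (M$m$k) = M$k$m" by (simp add: M_def herm_M)
  have Dent: "\<And>k m. D$k$m = M$k$m - (if k = m then complex_of_real c else 0)"
    using Meq by (simp add: mat_def)
  have hD: "\<And>k m. cnj (D$m$k) = D$k$m" using hM by (simp add: Dent)
  have tMM: "trace (M ** M) = complex_of_real c * trace M"
  proof -
    have "trace (M ** M) = trace (M ** mat (complex_of_real c)) + trace (M ** D)"
      by (subst (2) Meq) (simp add: matrix_add_ldistrib trace_add)
    thus ?thesis using tMD by (simp add: trace_mat_r)
  qed
  have tDD: "trace (D ** D) + complex_of_real c * trace D = 0"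
  proof -
    have "trace (M ** D) = trace (D ** M)" by (rule trace_mul_sym)
    also have "\<dots> = trace (D ** mat (complex_of_real c)) + trace (D ** D)"
      by (subst Meq) (simp add: matrix_add_ldistrib trace_add)
    finally show ?thesis using tMD by (simp add: trace_mat_r add.commute)
  qed
  define r where "r = (\<Sum>k\<in>UNIV. \<Sum>m\<in>UNIV. (cmod (M$k$m))\<^sup>2)"
  have rpos: "0 < r" unfolding r_def by (rule pos_sq[OF tM0])
  have tMMr: "trace (M ** M) = complex_of_real r" unfolding r_def by (rule tr_sq[OF hM])
  have c1: "complex_of_real c = trace (M ** M) / trace M" using tMM tM0 by simp
  have c2: "complex_of_real c = - (1/2) * trace (M ** M) / complex_of_real b"
    using tMM tM bpos by simp
  have "complex_of_real r = complex_of_real (- 2 * c * b)" using tMMr tMM tM by (simp add: algebra_simps)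
  hence req: "r = - 2 * c * b" by (simp only: of_real_eq_iff)
  have cneg: "c < 0"
  proof (rule ccontr)
    assume "\<not> c < 0"
    hence "0 \<le> c * b" using bpos by simp
    thus False using req rpos by simp
  qed
  have part2: "trace D \<noteq> 0 \<longrightarrow>
         complex_of_real c = - trace (D ** D) / trace D \<and> trace D \<in> \<real> \<and> 0 < Re (trace D)"
  proof
    assume tD0: "trace D \<noteq> 0"
    have cc: "complex_of_real c = - trace (D ** D) / trace D"
      using tDD tD0 by (simp add: field_simps add_eq_0_iff)
    have real: "trace D \<in> \<real>" unfolding trace_def
      by (rule sum_in_Reals) (metis hD Reals_cnj_iff)
    define q where "q = (\<Sum>k\<in>UNIV. \<Sum>m\<in>UNIV. (cmod (D$k$m))\<^sup>2)"
    have qpos: "0 < q" unfolding q_def by (rule pos_sq[OF tD0])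
    have tDDq: "trace (D ** D) = complex_of_real q" unfolding q_def by (rule tr_sq[OF hD])
    have tDs: "trace D = complex_of_real (Re (trace D))" using real by (simp add: complex_is_Real_iff complex_eq_iff)
    have "complex_of_real (q + c * Re (trace D)) = 0"
      using tDD tDDq tDs by (metis of_real_add of_real_mult)
    hence "q + c * Re (trace D) = 0" by (simp only: of_real_eq_0_iff)
    hence "c * Re (trace D) < 0" using qpos by simp
    hence "0 < Re (trace D)" using cneg by (simp add: mult_less_0_iff)
    thus "complex_of_real c = - trace (D ** D) / trace D \<and> trace D \<in> \<real> \<and> 0 < Re (trace D)"
      using cc real by simp
  qed
  show ?thesis using c1 c2 cneg part2 by (simp add: M_def b_def)
qed

end
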